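(* Let $\Omega\subset\mathbb{C}^n$ be a Reinhardt domain and let $A$ be a Banach space of holomorphic functions on $\Omega$ such that for each $z\in\Omega$ the evaluation functional $f\mapsto f(z)$ is continuous on $A$. Then for every $m>0$ the series $$\sum_{\alpha\in\mathbb{Z}^n,\ e_\alpha\in A}\frac{e_\alpha}{\|e_\alpha\|_A^m}$$ converges locally normally on $\Omega^{(m)}$.
   Context: $\Omega$ Reinhardt means invariant under $z\mapsto(e^{i\theta_1}z_1,\dots,e^{i\theta_n}z_n)$ for all $\theta\in\mathbb{R}^n$. $e_\alpha(z)=z_1^{\alpha_1}\cdots z_n^{\alpha_n}$. The $m$-th Reinhardt power of $\Omega$ is $\Omega^{(m)}=\{z\in\mathbb{C}^n:(|z_1|^{1/m},\dots,|z_n|^{1/m})\in\Omega\}$. A series of functions $\sum_\alpha h_\alpha$ converges locally normally on a domain $D$ if for every compact $K\subset D$, $\sum_\alpha\sup_K|h_\alpha|<\infty$. *)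

theory Defs
  imports "HOL-Analysis.Analysis"
begin

definition reinhardt :: "(complex ^ 'n) set \<Rightarrow> bool" where
  "reinhardt \<Omega> \<longleftrightarrow>
     (\<forall>z\<in>\<Omega>. \<forall>\<theta>::real ^ 'n. (\<chi> i. exp (\<i> * of_real (\<theta> $ i)) * z $ i) \<in> \<Omega>)"

definition domain :: "(complex ^ 'n) set \<Rightarrow> bool" where
  "domain \<Omega> \<longleftrightarrow> open \<Omega> \<and> connected \<Omega>"

definition holo_on :: "(complex ^ 'n \<Rightarrow> complex) \<Rightarrow> (complex ^ 'n) set \<Rightarrow> bool" where
  "holo_on f \<Omega> \<longleftrightarrow>
     (\<forall>z\<in>\<Omega>. \<exists>L. (f has_derivative L) (at z) \<and> (\<forall>c v. L (c *s v) = c * L v))"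

definition monom :: "int ^ 'n \<Rightarrow> complex ^ 'n \<Rightarrow> complex" where
  "monom \<alpha> z = (\<Prod>i\<in>UNIV. (z $ i) powi (\<alpha> $ i))"

definition reinhardt_power :: "(complex ^ 'n) set \<Rightarrow> real \<Rightarrow> (complex ^ 'n) set" where
  "reinhardt_power \<Omega> m = {z. (\<chi> i. complex_of_real (norm (z $ i) powr (1 / m))) \<in> \<Omega>}"

text \<open>Restriction of a function to \<Omega> (elements of a function space on \<Omega> are
  represented canonically as functions vanishing outside \<Omega>).\<close>
definition restr :: "(complex ^ 'n) set \<Rightarrow> (complex ^ 'n \<Rightarrow> complex) \<Rightarrow> (complex ^ 'n \<Rightarrow> complex)" where
  "restr \<Omega> f = (\<lambda>z. if z \<in> \<Omega> then f z else 0)"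

definition banach_holo_space ::
  "(complex ^ 'n) set \<Rightarrow> (complex ^ 'n \<Rightarrow> complex) set \<Rightarrow> ((complex ^ 'n \<Rightarrow> complex) \<Rightarrow> real) \<Rightarrow> bool" where
  "banach_holo_space \<Omega> A N \<longleftrightarrow>
     (\<forall>f\<in>A. holo_on f \<Omega> \<and> (\<forall>z. z \<notin> \<Omega> \<longrightarrow> f z = 0)) \<and>
     (\<lambda>_. 0) \<in> A \<and>
     (\<forall>f\<in>A. \<forall>g\<in>A. (\<lambda>z. f z + g z) \<in> A) \<and>
     (\<forall>f\<in>A. \<forall>c::complex. (\<lambda>z. c * f z) \<in> A) \<and>
     (\<forall>f\<in>A. N f \<ge> 0) \<and>
     (\<forall>f\<in>A. N f = 0 \<longrightarrow> f = (\<lambda>_. 0)) \<and>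
     (\<forall>f\<in>A. \<forall>c::complex. N (\<lambda>z. c * f z) = norm c * N f) \<and>
     (\<forall>f\<in>A. \<forall>g\<in>A. N (\<lambda>z. f z + g z) \<le> N f + N g) \<and>
     (\<forall>s::nat \<Rightarrow> (complex ^ 'n \<Rightarrow> complex). (\<forall>k. s k \<in> A) \<longrightarrow>
        (\<forall>e>0. \<exists>K. \<forall>p\<ge>K. \<forall>q\<ge>K. N (\<lambda>z. s p z - s q z) < e) \<longrightarrow>
        (\<exists>f\<in>A. (\<lambda>k. N (\<lambda>z. s k z - f z)) \<longlonglongrightarrow> 0)) \<and>
     (\<forall>z\<in>\<Omega>. \<exists>C. \<forall>f\<in>A. norm (f z) \<le> C * N f)"

definition locally_normally_convergent ::
  "('i \<Rightarrow> complex ^ 'n \<Rightarrow> complex) \<Rightarrow> 'i set \<Rightarrow> (complex ^ 'n) set \<Rightarrow> bool" where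
  "locally_normally_convergent h S D \<longleftrightarrow>
     (\<forall>K. K \<subseteq> D \<and> compact K \<longrightarrow>
        (\<exists>M::'i \<Rightarrow> real. M summable_on S \<and> (\<forall>\<alpha>\<in>S. \<forall>z\<in>K. norm (h \<alpha> z) \<le> M \<alpha>)))"

end

theory Submission
  imports Defs
begin



lemma geo_int_bound:
  fixes x :: real assumes "0 \<le> x" "x < 1"
  shows "(\<Sum>j\<in>{-int k..int k}. x ^ nat \<bar>j\<bar>) \<le> 2 / (1 - x)"
proof -
  have sub: "{-int k..int k} \<subseteq> int ` {..<Suc k} \<union> (\<lambda>n. - int n) ` {..<Suc k}"
  proof
    fix j assume j: "j \<in> {-int k..int k}"
    show "j \<in> int ` {..<Suc k} \<union> (\<lambda>n. - int n) ` {..<Suc k}"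
    proof (cases "j \<ge> 0")
      case True then have "j = int (nat j)" by simp
      moreover have "nat j \<in> {..<Suc k}" using j by auto
      ultimately show ?thesis by blast
    next
      case False then have "j = - int (nat (-j))" by simp
      moreover have "nat (-j) \<in> {..<Suc k}" using j by auto
      ultimately show ?thesis by blast
    qed
  qed
  have "(\<Sum>j\<in>{-int k..int k}. x ^ nat \<bar>j\<bar>) \<le> (\<Sum>j\<in>int ` {..<Suc k} \<union> (\<lambda>n. - int n) ` {..<Suc k}. x ^ nat \<bar>j\<bar>)"
    by (rule sum_mono2) (use sub assms in auto)
  also have "\<dots> \<le> (\<Sum>j\<in>int ` {..<Suc k}. x ^ nat \<bar>j\<bar>) + (\<Sum>j\<in>(\<lambda>n. - int n) ` {..<Suc k}. x ^ nat \<bar>j\<bar>)"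
    proof -
    let ?A = "int ` {..<Suc k}" and ?B = "(\<lambda>n. - int n) ` {..<Suc k}"
    have "(\<Sum>j\<in>?A \<union> ?B. x ^ nat \<bar>j\<bar>) + (\<Sum>j\<in>?A \<inter> ?B. x ^ nat \<bar>j\<bar>) = (\<Sum>j\<in>?A. x ^ nat \<bar>j\<bar>) + (\<Sum>j\<in>?B. x ^ nat \<bar>j\<bar>)"
      by (rule sum.union_inter) auto
    moreover have "(\<Sum>j\<in>?A \<inter> ?B. x ^ nat \<bar>j\<bar>) \<ge> 0" using assms by (auto intro!: sum_nonneg)
    ultimately show ?thesis by linarith
  qed
  also have "(\<Sum>j\<in>int ` {..<Suc k}. x ^ nat \<bar>j\<bar>) = (\<Sum>n<Suc k. x ^ n)"
    by (subst sum.reindex) (auto simp: inj_on_def)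
  also have "(\<Sum>j\<in>(\<lambda>n. - int n) ` {..<Suc k}. x ^ nat \<bar>j\<bar>) = (\<Sum>n<Suc k. x ^ n)"
    by (subst sum.reindex) (auto simp: inj_on_def)
  also have "(\<Sum>n<Suc k. x ^ n) \<le> 1 / (1 - x)"
  proof -
    have "x \<noteq> 1" using assms by simp
    have "(\<Sum>n<Suc k. x ^ n) = (1 - x ^ Suc k) / (1 - x)"
      by (simp only: sum_gp_strict) (simp add: \<open>x \<noteq> 1\<close>)
    also have "\<dots> \<le> 1 / (1 - x)"
      using assms by (intro divide_right_mono) auto
    finally show ?thesis .
  qed
  finally show ?thesis by simp
qed

lemma summable_geo_vec:
  fixes x :: real and S :: "(int ^ 'n) set"
  assumes "0 \<le> x" "x < 1"
  shows "(\<lambda>\<alpha>. \<Prod>i\<in>UNIV. x ^ nat \<bar>\<alpha> $ i\<bar>) summable_on S"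
proof (rule nonneg_bdd_above_summable_on)
  show "\<And>\<alpha>. \<alpha> \<in> S \<Longrightarrow> 0 \<le> (\<Prod>i\<in>UNIV. x ^ nat \<bar>\<alpha> $ i\<bar>)"
    using assms by (simp add: prod_nonneg)
  show "bdd_above (sum (\<lambda>\<alpha>. \<Prod>i\<in>UNIV. x ^ nat \<bar>\<alpha> $ i\<bar>) ` {F. F \<subseteq> S \<and> finite F})"
  proof (rule bdd_aboveI2)
    fix F assume F: "F \<in> {F. F \<subseteq> S \<and> finite F}"
    define k where "k = Max (insert 0 {nat \<bar>\<alpha> $ i\<bar> |\<alpha> i. \<alpha> \<in> F})"
    have finF: "finite F" using F by auto
    have fin2: "finite {nat \<bar>\<alpha> $ i\<bar> |\<alpha> i. \<alpha> \<in> F}"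
    proof -
      have "{nat \<bar>\<alpha> $ i\<bar> |\<alpha> i. \<alpha> \<in> F} = (\<lambda>(\<alpha>,i). nat \<bar>\<alpha> $ i\<bar>) ` (F \<times> UNIV)" by auto
      then show ?thesis using finF by simp
    qed
    define V where "V = vec_lambda ` (PiE UNIV (\<lambda>_::'n. {-int k..int k}))"
    have FV: "F \<subseteq> V"
    proof
      fix \<alpha> assume a: "\<alpha> \<in> F"
      have "nat \<bar>\<alpha> $ i\<bar> \<le> k" for i
        unfolding k_def using a fin2 by (intro Max_ge) auto
      then have kb: "\<bar>\<alpha> $ i\<bar> \<le> int k" for i by (simp add: nat_le_iff)
      have "- int k \<le> \<alpha> $ i \<and> \<alpha> $ i \<le> int k" for i using kb[of i] by (auto simp: abs_le_iff)
      then have "\<alpha> $ i \<in> {-int k..int k}" for i by simp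
      then have mem: "(\<lambda>i. \<alpha> $ i) \<in> PiE UNIV (\<lambda>_::'n. {-int k..int k})" by (simp add: PiE_UNIV_domain)
      have "\<alpha> = vec_lambda (\<lambda>i. \<alpha> $ i)" by simp
      then show "\<alpha> \<in> V" unfolding V_def using mem by (rule image_eqI)
    qed
    have finV: "finite V" unfolding V_def by (auto intro!: finite_PiE)
    have "sum (\<lambda>\<alpha>. \<Prod>i\<in>UNIV. x ^ nat \<bar>\<alpha> $ i\<bar>) F \<le> sum (\<lambda>\<alpha>. \<Prod>i\<in>UNIV. x ^ nat \<bar>\<alpha> $ i\<bar>) V"
      by (rule sum_mono2[OF finV FV]) (use assms in \<open>simp add: prod_nonneg\<close>)
    also have "\<dots> = (\<Sum>g\<in>PiE UNIV (\<lambda>_::'n. {-int k..int k}). \<Prod>i\<in>UNIV. x ^ nat \<bar>g i\<bar>)"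
      unfolding V_def
      by (subst sum.reindex) (auto simp: inj_on_def vec_lambda_inject)
    also have "\<dots> = (\<Prod>i\<in>(UNIV::'n set). \<Sum>j\<in>{-int k..int k}. x ^ nat \<bar>j\<bar>)"
      by (rule prod_sum_PiE[symmetric]) auto
    also have "\<dots> \<le> (\<Prod>i\<in>(UNIV::'n set). 2 / (1 - x))"
    proof (rule prod_mono)
      fix i :: 'n
      show "0 \<le> (\<Sum>j\<in>{-int k..int k}. x ^ nat \<bar>j\<bar>) \<and> (\<Sum>j\<in>{-int k..int k}. x ^ nat \<bar>j\<bar>) \<le> 2 / (1 - x)"
        using assms geo_int_bound[OF assms, of k] by (simp add: sum_nonneg)
    qed
    finally show "sum (\<lambda>\<alpha>. \<Prod>i\<in>UNIV. x ^ nat \<bar>\<alpha> $ i\<bar>) F \<le> (2 / (1 - x)) ^ CARD('n)" by simp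
  qed
qed


lemma norm_le_l1_cvec: "norm (x :: complex ^ 'n) \<le> (\<Sum>i\<in>UNIV. norm (x $ i))"
  by (simp add: norm_vec_def L2_set_le_sum)

lemma powi_neg_ge:
  fixes u :: real assumes "0 < u" "u \<le> 1" "a < 0"
  shows "u powi a \<ge> 1 / u"
proof -
  have "u powi a = inverse (u ^ nat (-a))" using assms by (simp add: power_int_def power_inverse)
  moreover have "u ^ nat (-a) \<le> u ^ 1"
    using assms by (intro power_decreasing) auto
  moreover have "u ^ nat (-a) > 0" using assms by simp
  ultimately show ?thesis by (simp add: divide_inverse le_imp_inverse_le)
qed

lemma neg_exp_nonzero:
  fixes \<Omega> :: "(complex ^ 'n) set"
  assumes "open \<Omega>" and "banach_holo_space \<Omega> A N" and "restr \<Omega> (monom \<alpha>) \<in> A"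
    and "p \<in> \<Omega>" and "\<alpha> $ i < 0"
  shows "p $ i \<noteq> 0"
proof
  assume pi0: "p $ i = 0"
  define f where "f = restr \<Omega> (monom \<alpha>)"
  have "holo_on f \<Omega>" using assms unfolding banach_holo_space_def f_def by blast
  then obtain L where "(f has_derivative L) (at p)" using assms(4) unfolding holo_on_def by blast
  then have "isCont f p" by (rule has_derivative_continuous)
  have fp: "f p = 0"
  proof -
    have "(p $ i) powi (\<alpha> $ i) = 0" using pi0 assms(5) by simp
    then have "monom \<alpha> p = 0" unfolding monom_def by (intro prod_zero) auto
    then show ?thesis using assms(4) by (simp add: f_def restr_def)
  qed
  obtain d1 where d1: "d1 > 0" "\<And>z. dist z p < d1 \<Longrightarrow> dist (f z) (f p) < 1"
    using \<open>isCont f p\<close> unfolding continuous_at_eps_delta by (meson zero_less_one)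
  obtain d2 where d2: "d2 > 0" "ball p d2 \<subseteq> \<Omega>" using assms(1,4) open_contains_ball by blast
  define e where "e = min d1 d2"
  have e: "e > 0" "e \<le> d1" "e \<le> d2" using d1 d2 by (auto simp: e_def)
  define t where "t = e / (2 * real CARD('n))"
  have t: "t > 0" "real CARD('n) * t = e / 2" using e by (auto simp: t_def)
  define w where "w = (\<chi> j. if p $ j = 0 then complex_of_real t else p $ j)"
  have wnz: "w $ j \<noteq> 0" for j using t by (auto simp: w_def)
  define c where "c = (\<Prod>j\<in>UNIV - {i}. norm (w $ j) powi (\<alpha> $ j))"
  have c: "c > 0" unfolding c_def using wnz by (intro prod_pos) (auto intro!: zero_less_power_int)
  define u where "u = min (e/4) (min c (1/2))"
  have u: "u > 0" "u \<le> e/4" "u \<le> c" "u \<le> 1" using e c by (auto simp: u_def)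
  define z where "z = (\<chi> j. if j = i then complex_of_real u else w $ j)"
  have "norm (z - p) \<le> (\<Sum>j\<in>UNIV. norm ((z - p) $ j))" by (rule norm_le_l1_cvec)
  also have "\<dots> \<le> (\<Sum>j\<in>UNIV. (if j = i then u else 0) + t)"
    using u t pi0 by (intro sum_mono) (auto simp: z_def w_def)
  also have "\<dots> = u + real CARD('n) * t" by (simp add: sum.distrib)
  also have "\<dots> < e" using u t e by simp
  finally have "dist z p < e" by (simp add: dist_norm)
  then have zin: "z \<in> \<Omega>" using d2 e by (auto simp: dist_commute)
  have "dist (f z) (f p) < 1" using d1(2)[of z] \<open>dist z p < e\<close> e by simp
  note zin this
  then have lt1: "norm (monom \<alpha> z) < 1" using fp by (simp add: f_def restr_def)
  have "monom \<alpha> z = (z $ i) powi (\<alpha> $ i) * (\<Prod>j\<in>UNIV - {i}. (z $ j) powi (\<alpha> $ j))"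
    unfolding monom_def by (rule prod.remove) auto
  also have "(\<Prod>j\<in>UNIV - {i}. (z $ j) powi (\<alpha> $ j)) = (\<Prod>j\<in>UNIV - {i}. (w $ j) powi (\<alpha> $ j))"
    by (intro prod.cong) (auto simp: z_def)
  finally have "norm (monom \<alpha> z) = u powi (\<alpha> $ i) * c"
    using u by (simp add: z_def c_def norm_mult flip: prod_norm add: norm_power_int)
  also have "\<dots> \<ge> (1 / u) * c"
    using powi_neg_ge[of u "\<alpha> $ i"] u assms(5) c by (intro mult_right_mono) auto
  finally have "norm (monom \<alpha> z) \<ge> c / u" by simp
  moreover have "c / u \<ge> 1" using u c by simp
  ultimately show False using lt1 by simp
qed


lemma powi_powr_real: fixes x :: real assumes "x > 0" shows "x powi k = x powr (of_int k)"
proof (cases "k \<ge> 0")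
  case True
  then have "x powi k = x ^ nat k" by (simp add: power_int_def)
  also have "\<dots> = x powr real (nat k)" using assms by (simp add: powr_realpow)
  finally show ?thesis using True by simp
next
  case False
  then have "x powi k = inverse (x ^ nat (-k))" by (simp add: power_int_def power_inverse)
  also have "\<dots> = inverse (x powr real (nat (-k)))" using assms by (simp add: powr_realpow)
  also have "\<dots> = x powr (- real (nat (-k)))" using assms by (simp add: powr_minus)
  finally show ?thesis using False by simp
qed

lemma powi_powr_swap: fixes x :: real assumes "x \<ge> 0"
  shows "(x powi k) powr m = (x powr m) powi k"
proof (cases "x = 0")
  case True
  then show ?thesis by (cases "k = 0") auto
next
  case False
  then have x: "x > 0" using assms by simp
  have "(x powi k) powr m = x powr (of_int k * m)" using x by (simp add: powi_powr_real powr_powr)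
  also have "\<dots> = (x powr m) powr (of_int k)" by (simp add: powr_powr mult.commute)
  also have "\<dots> = (x powr m) powi k" using x by (simp add: powi_powr_real)
  finally show ?thesis .
qed

lemma finite_eval_bound:
  assumes "banach_holo_space \<Omega> A N" "finite P" "P \<subseteq> \<Omega>"
  shows "\<exists>C\<ge>0. \<forall>z\<in>P. \<forall>f\<in>A. norm (f z) \<le> C * N f"
  using assms(2,3)
proof (induction P rule: finite_induct)
  case empty then show ?case by auto
next
  case (insert p P)
  then obtain C where C: "C \<ge> 0" "\<forall>z\<in>P. \<forall>f\<in>A. norm (f z) \<le> C * N f" by auto
  obtain C' where C': "\<forall>f\<in>A. norm (f p) \<le> C' * N f"
    using assms(1) insert.prems unfolding banach_holo_space_def by auto
  have Npos: "\<forall>f\<in>A. N f \<ge> 0" using assms(1) unfolding banach_holo_space_def by auto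
  show ?case
  proof (intro exI[of _ "max C C'"] conjI ballI)
    show "0 \<le> max C C'" using C by simp
    fix z f assume z: "z \<in> insert p P" and f: "f \<in> A"
    have "C * N f \<le> max C C' * N f" "C' * N f \<le> max C C' * N f"
      using Npos f by (auto intro: mult_right_mono)
    then show "norm (f z) \<le> max C C' * N f" using z f C C' by force
  qed
qed


lemma powr_prod_real: "(\<Prod>i\<in>I. f i) powr (m::real) = (\<Prod>i\<in>I. (f i :: real) powr m)"
proof (induction I rule: infinite_finite_induct)
  case (insert x F) then show ?case by (simp add: powr_mult)
qed auto

lemma summable_on_finite_sum:
  fixes M :: "'b \<Rightarrow> 'a \<Rightarrow> real"
  assumes "finite T" "\<And>t. t \<in> T \<Longrightarrow> M t summable_on S"
  shows "(\<lambda>\<alpha>. \<Sum>t\<in>T. M t \<alpha>) summable_on S"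
  using assms
proof (induction T rule: finite_induct)
  case (insert x F) then show ?case by (simp add: summable_on_add)
qed auto

lemma phi_cont: fixes m :: real assumes "m > 0"
  shows "continuous_on UNIV (\<lambda>w::complex^'n. \<chi> i. complex_of_real (norm (w $ i) powr (1/m)))"
  using assms
  by (intro continuous_on_vec_lambda continuous_on_of_real continuous_on_powr' continuous_intros) auto



lemma coord_bound:
  fixes a b d q R :: real and k :: int
  assumes a: "a \<ge> 0" and b: "b \<ge> 0" and ab: "\<bar>b - a\<bar> < d" and d: "d > 0" and aR: "a \<le> R"
    and q: "q = 1 - d / (R + 2*d)" and neg: "k < 0 \<Longrightarrow> a \<ge> 4*d"
  shows "b powi k \<le> q ^ nat \<bar>k\<bar> * \<bar>a + 2 * d * of_int (sgn k)\<bar> powi k"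
proof -
  have Rd: "R + 2*d > 0" using a aR d by linarith
  have q0: "q > 0"
  proof -
    have "d / (R + 2*d) < 1" using Rd a aR d by (simp add: divide_less_eq)
    then show ?thesis using q by simp
  qed
  consider "k = 0" | "k > 0" | "k < 0" by linarith
  then show ?thesis
  proof cases
    case 1 then show ?thesis by simp
  next
    case 2
    define c where "c = a + 2*d"
    have c: "c > 0" "c \<le> R + 2*d" using a d aR by (auto simp: c_def)
    have "d * c / (R + 2*d) \<le> d"
      using c d Rd by (simp add: divide_le_eq mult_left_mono)
    moreover have "q * c = c - d * c / (R + 2*d)" unfolding q by (simp add: left_diff_distrib)
    ultimately have "b \<le> q * c" using ab by (simp add: c_def)
    then have "b ^ nat k \<le> (q * c) ^ nat k" using b by (intro power_mono) auto
    then show ?thesis using 2 c by (simp add: power_int_def power_mult_distrib c_def)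
  next
    case 3
    define c where "c = a - 2*d"
    have a4: "a \<ge> 4*d" using neg 3 by simp
    have c: "c > 0" using a4 d by (simp add: c_def)
    have bpos: "b > 0" "b \<le> R + 2*d" using ab a4 d aR by auto
    have "d * b / (R + 2*d) \<le> d"
      using bpos d Rd by (simp add: divide_le_eq mult_left_mono)
    moreover have "q * b = b - d * b / (R + 2*d)" unfolding q by (simp add: left_diff_distrib)
    ultimately have cb: "c \<le> q * b" using ab by (simp add: c_def)
    define n where "n = nat (-k)"
    have n: "n > 0" "nat \<bar>k\<bar> = n" using 3 by (auto simp: n_def)
    have "c ^ n \<le> (q * b) ^ n" using cb c by (intro power_mono) auto
    then have "inverse (b ^ n) \<le> q ^ n * inverse (c ^ n)"
      using c bpos q0 by (simp add: power_mult_distrib field_simps)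
    moreover have "b powi k = inverse (b ^ n)" using 3 by (simp add: power_int_def n_def power_inverse)
    moreover have "\<bar>a + 2 * d * of_int (sgn k)\<bar> powi k = inverse (c ^ n)"
      using 3 c by (simp add: power_int_def n_def power_inverse c_def)
    ultimately show ?thesis using n by simp
  qed
qed



lemma pow_powr_swap: fixes q :: real assumes "q \<ge> 0" shows "(q ^ n) powr m = (q powr m) ^ n"
  using powi_powr_swap[OF assms, of "int n" m] by simp

lemma local_bound:
  fixes \<Omega> :: "(complex ^ 'n) set" and m :: real
  assumes opn: "open \<Omega>" and B: "banach_holo_space \<Omega> A N" and m: "m > 0"
    and w0: "w0 \<in> reinhardt_power \<Omega> m"
  shows "\<exists>U M. open U \<and> w0 \<in> U \<and> (\<forall>\<alpha>. M \<alpha> \<ge> 0) \<and> M summable_on {\<alpha>. restr \<Omega> (monom \<alpha>) \<in> A} \<and>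
     (\<forall>\<alpha>\<in>{\<alpha>. restr \<Omega> (monom \<alpha>) \<in> A}. \<forall>w\<in>U.
        norm (monom \<alpha> w / complex_of_real (N (restr \<Omega> (monom \<alpha>)) powr m)) \<le> M \<alpha>)"
proof -
  define \<phi> where "\<phi> = (\<lambda>w::complex^'n. \<chi> i. complex_of_real (norm (w $ i) powr (1/m)))"
  define a where "a i = norm (w0 $ i) powr (1/m)" for i
  have a0: "a i \<ge> 0" for i by (simp add: a_def)
  have r0: "\<phi> w0 \<in> \<Omega>" using w0 by (simp add: reinhardt_power_def \<phi>_def)
  have r0a: "\<phi> w0 $ i = complex_of_real (a i)" for i by (simp add: \<phi>_def a_def)
  obtain \<delta> where \<delta>: "\<delta> > 0" "ball (\<phi> w0) \<delta> \<subseteq> \<Omega>" using opn r0 open_contains_ball by blast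
  define D where "D = insert (\<delta> / (4 * real CARD('n))) ((\<lambda>i. a i / 4) ` {i. a i > 0})"
  define d where "d = Min D"
  have finD: "finite D" "D \<noteq> {}" by (auto simp: D_def)
  have d: "d > 0" "d \<le> \<delta> / (4 * real CARD('n))" "\<And>i. a i > 0 \<Longrightarrow> d \<le> a i / 4"
  proof -
    show "d > 0" unfolding d_def using finD \<delta> by (subst Min_gr_iff) (auto simp: D_def)
    show "d \<le> \<delta> / (4 * real CARD('n))" unfolding d_def using finD by (intro Min_le) (auto simp: D_def)
    show "\<And>i. a i > 0 \<Longrightarrow> d \<le> a i / 4" unfolding d_def using finD by (intro Min_le) (auto simp: D_def)
  qed
  define R where "R = (\<Sum>i\<in>UNIV. a i)"
  have aR: "a i \<le> R" for i unfolding R_def by (rule member_le_sum) (auto simp: a0)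
  have R0: "R \<ge> 0" using aR[of undefined] a0[of undefined] by linarith
  define q where "q = 1 - d / (R + 2*d)"
  have q: "0 < q" "q < 1"
  proof -
    have "d / (R + 2*d) < 1" using R0 d by (simp add: divide_less_eq)
    moreover have "d / (R + 2*d) > 0" using R0 d by simp
    ultimately show "0 < q" "q < 1" by (auto simp: q_def)
  qed
  define pt where "pt s = (\<chi> i. complex_of_real (a i + 2 * d * of_int (s i)))" for s :: "'n \<Rightarrow> int"
  define P where "P = pt ` (PiE UNIV (\<lambda>_. {-1,0,1}))"
  have finP: "finite P" unfolding P_def by (auto intro!: finite_PiE)
  have P\<Omega>: "P \<subseteq> \<Omega>"
  proof
    fix z assume "z \<in> P"
    then obtain s where s: "s \<in> PiE UNIV (\<lambda>_. {-1,0,1})" and z: "z = pt s" by (auto simp: P_def)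
    have "norm (z - \<phi> w0) \<le> (\<Sum>i\<in>UNIV. norm ((z - \<phi> w0) $ i))" by (rule norm_le_l1_cvec)
    also have "\<dots> \<le> (\<Sum>i\<in>(UNIV::'n set). 2 * d)"
    proof (rule sum_mono)
      fix i :: 'n
      have "s i \<in> {-1,0,1}" using s by auto
      then have "\<bar>of_int (s i) :: real\<bar> \<le> 1" by auto
      then have "\<bar>2 * d * of_int (s i)\<bar> \<le> 2 * d" using d(1) by (simp add: abs_mult)
      moreover have "(z - \<phi> w0) $ i = complex_of_real (2 * d * of_int (s i))"
        by (simp add: z pt_def r0a)
      then have "norm ((z - \<phi> w0) $ i) = \<bar>2 * d * of_int (s i)\<bar>" by (simp only: norm_of_real)
      ultimately show "norm ((z - \<phi> w0) $ i) \<le> 2 * d" by linarith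
    qed
    also have "\<dots> = real CARD('n) * (2 * d)" by simp
    also have "\<dots> \<le> real CARD('n) * (2 * (\<delta> / (4 * real CARD('n))))"
      using d by (intro mult_left_mono) auto
    also have "\<dots> < \<delta>" using \<delta> by simp
    finally show "z \<in> \<Omega>" using \<delta> by (auto simp: dist_norm norm_minus_commute)
  qed
  obtain C where C: "C \<ge> 0" "\<forall>z\<in>P. \<forall>f\<in>A. norm (f z) \<le> C * N f"
    using finite_eval_bound[OF B finP P\<Omega>] by blast
  define U where "U = \<phi> -` ball (\<phi> w0) d"
  define M where "M \<alpha> = C powr m * (\<Prod>i\<in>UNIV. (q powr m) ^ nat \<bar>\<alpha> $ i\<bar>)" for \<alpha> :: "int^'n"
  have qm: "0 \<le> q powr m" "q powr m < 1"
    using powr_less_mono2[of m q 1] m q by auto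
  show ?thesis
  proof (intro exI[of _ U] exI[of _ M] conjI allI ballI)
    show "open U"
      using phi_cont[OF m] unfolding U_def \<phi>_def
      by (subst (asm) continuous_on_open_vimage) auto
    show "w0 \<in> U" using d by (simp add: U_def)
    show "M \<alpha> \<ge> 0" for \<alpha> unfolding M_def using qm by (auto intro!: mult_nonneg_nonneg prod_nonneg)
    show "M summable_on {\<alpha>. restr \<Omega> (monom \<alpha>) \<in> A}"
      unfolding M_def by (intro summable_on_cmult_right summable_geo_vec qm)
    fix \<alpha> w assume \<alpha>: "\<alpha> \<in> {\<alpha>. restr \<Omega> (monom \<alpha>) \<in> A}" and w: "w \<in> U"
    show "norm (monom \<alpha> w / complex_of_real (N (restr \<Omega> (monom \<alpha>)) powr m)) \<le> M \<alpha>"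
    proof -
      define b where "b i = norm (w $ i) powr (1/m)" for i
      have b0: "b i \<ge> 0" for i by (simp add: b_def)
      have \<phi>w: "\<phi> w $ i = complex_of_real (b i)" for i by (simp add: \<phi>_def b_def)
      have bd: "\<bar>b i - a i\<bar> < d" for i
      proof -
        have "norm ((\<phi> w0 - \<phi> w) $ i) \<le> norm (\<phi> w0 - \<phi> w)" by (rule Finite_Cartesian_Product.norm_nth_le)
        also have "\<dots> < d" using w by (simp add: U_def dist_norm)
        finally have "norm ((\<phi> w0 - \<phi> w) $ i) < d" .
        moreover have "(\<phi> w0 - \<phi> w) $ i = complex_of_real (a i - b i)" by (simp add: r0a \<phi>w)
        ultimately show ?thesis by (metis norm_of_real abs_minus_commute)
      qed
      define s where "s i = sgn (\<alpha> $ i)" for i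
      have sP: "pt s \<in> P" unfolding P_def
        by (rule imageI) (auto simp: s_def sgn_if PiE_UNIV_domain)
      define c where "c i = a i + 2 * d * of_int (sgn (\<alpha> $ i))" for i
      have ptc: "pt s $ i = complex_of_real (c i)" for i by (simp add: pt_def c_def s_def)
      have neg: "4 * d \<le> a i" if "\<alpha> $ i < 0" for i
      proof -
        have "\<phi> w0 $ i \<noteq> 0" using neg_exp_nonzero[OF opn B _ r0 that] \<alpha> by simp
        then have "a i > 0" using a0[of i] r0a[of i] by fastforce
        then show ?thesis using d(3)[of i] by simp
      qed
      have cb: "b i powi (\<alpha> $ i) \<le> q ^ nat \<bar>\<alpha> $ i\<bar> * \<bar>c i\<bar> powi (\<alpha> $ i)" for i
        unfolding c_def by (rule coord_bound[OF a0 b0 bd d(1) aR q_def neg])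
      have nmr: "norm (monom \<alpha> (\<phi> w)) = (\<Prod>i\<in>UNIV. b i powi (\<alpha> $ i))"
        unfolding monom_def by (simp add: \<phi>w b0 norm_power_int flip: prod_norm)
      have nmp: "norm (monom \<alpha> (pt s)) = (\<Prod>i\<in>UNIV. \<bar>c i\<bar> powi (\<alpha> $ i))"
        unfolding monom_def by (simp add: ptc norm_power_int flip: prod_norm)
      define G where "G = (\<Prod>i\<in>UNIV. q ^ nat \<bar>\<alpha> $ i\<bar>)"
      have G0: "G \<ge> 0" unfolding G_def using q by (auto intro!: prod_nonneg)
      define N\<alpha> where "N\<alpha> = N (restr \<Omega> (monom \<alpha>))"
      have N0: "N\<alpha> \<ge> 0" using B \<alpha> unfolding banach_holo_space_def N\<alpha>_def by auto
      have "pt s \<in> \<Omega>" using sP P\<Omega> by auto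
      then have "norm (monom \<alpha> (pt s)) \<le> C * N\<alpha>"
        using C(2) sP \<alpha> unfolding N\<alpha>_def by (force simp: restr_def)
      have "norm (monom \<alpha> (\<phi> w)) \<le> (\<Prod>i\<in>UNIV. q ^ nat \<bar>\<alpha> $ i\<bar> * \<bar>c i\<bar> powi (\<alpha> $ i))"
        unfolding nmr by (rule prod_mono) (use cb b0 in auto)
      also have "\<dots> = G * norm (monom \<alpha> (pt s))" unfolding nmp G_def by (rule prod.distrib)
      also have "\<dots> \<le> G * (C * N\<alpha>)" by (rule mult_left_mono) fact+
      finally have X: "norm (monom \<alpha> (\<phi> w)) \<le> G * (C * N\<alpha>)" .
      have "norm (monom \<alpha> (\<phi> w)) powr m = (\<Prod>i\<in>UNIV. (b i powi (\<alpha> $ i)) powr m)"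
        unfolding nmr by (rule powr_prod_real)
      also have "\<dots> = (\<Prod>i\<in>UNIV. (b i powr m) powi (\<alpha> $ i))"
        using b0 by (simp add: powi_powr_swap)
      also have "\<dots> = (\<Prod>i\<in>UNIV. norm (w $ i) powi (\<alpha> $ i))"
        using m by (simp add: b_def powr_powr powr_one)
      also have "\<dots> = norm (monom \<alpha> w)"
        unfolding monom_def by (simp add: norm_power_int flip: prod_norm)
      finally have mw: "norm (monom \<alpha> w) = norm (monom \<alpha> (\<phi> w)) powr m" by simp
      show ?thesis
      proof (cases "N\<alpha> = 0")
        case True
        then show ?thesis using \<open>\<And>\<alpha>. M \<alpha> \<ge> 0\<close> unfolding N\<alpha>_def by simp
      next
        case False
        then have Npos: "N\<alpha> > 0" using N0 by simp
        have "norm (monom \<alpha> w / complex_of_real (N\<alpha> powr m)) = norm (monom \<alpha> w) / N\<alpha> powr m"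
          by (simp add: norm_divide)
        also have "\<dots> \<le> (G * (C * N\<alpha>)) powr m / N\<alpha> powr m"
          unfolding mw using X m by (intro divide_right_mono powr_mono2) auto
        also have "\<dots> = G powr m * C powr m"
          using Npos by (simp add: powr_mult)
        also have "G powr m = (\<Prod>i\<in>UNIV. (q powr m) ^ nat \<bar>\<alpha> $ i\<bar>)"
          unfolding G_def using q by (simp add: powr_prod_real pow_powr_swap)
        finally show ?thesis unfolding M_def N\<alpha>_def by (simp add: mult.commute)
      qed
    qed
  qed
qed


theorem lemma3p3:
  fixes \<Omega> :: "(complex ^ 'n) set"
    and A :: "(complex ^ 'n \<Rightarrow> complex) set"
    and N :: "(complex ^ 'n \<Rightarrow> complex) \<Rightarrow> real"
    and m :: real
  assumes "domain \<Omega>" and "reinhardt \<Omega>"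
    and "banach_holo_space \<Omega> A N"
    and "m > 0"
  shows "locally_normally_convergent
           (\<lambda>\<alpha> z. monom \<alpha> z / complex_of_real (N (restr \<Omega> (monom \<alpha>)) powr m))
           {\<alpha>. restr \<Omega> (monom \<alpha>) \<in> A}
           (reinhardt_power \<Omega> m)"
proof -
  have opn: "open \<Omega>" using assms(1) by (simp add: domain_def)
  define S where "S = {\<alpha>. restr \<Omega> (monom \<alpha>) \<in> A}"
  define h where "h = (\<lambda>\<alpha> z. monom \<alpha> z / complex_of_real (N (restr \<Omega> (monom \<alpha>)) powr m))"
  define D where "D = reinhardt_power \<Omega> m"
  have "\<forall>w0\<in>D. \<exists>U M. open U \<and> w0 \<in> U \<and> (\<forall>\<alpha>. M \<alpha> \<ge> 0) \<and> M summable_on S \<and>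
          (\<forall>\<alpha>\<in>S. \<forall>w\<in>U. norm (h \<alpha> w) \<le> M \<alpha>)"
    using local_bound[OF opn assms(3) assms(4)] unfolding S_def h_def D_def by blast
  then obtain UU where "\<forall>w0\<in>D. \<exists>M. open (UU w0) \<and> w0 \<in> UU w0 \<and> (\<forall>\<alpha>. M \<alpha> \<ge> 0) \<and> M summable_on S \<and>
          (\<forall>\<alpha>\<in>S. \<forall>w\<in>UU w0. norm (h \<alpha> w) \<le> M \<alpha>)"
    by (metis bchoice)
  then obtain MM where UM: "\<forall>w0\<in>D. open (UU w0) \<and> w0 \<in> UU w0 \<and> (\<forall>\<alpha>. MM w0 \<alpha> \<ge> 0) \<and> MM w0 summable_on S \<and>
          (\<forall>\<alpha>\<in>S. \<forall>w\<in>UU w0. norm (h \<alpha> w) \<le> MM w0 \<alpha>)"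
    by (metis bchoice)
  have "\<exists>M::int^'n \<Rightarrow> real. M summable_on S \<and> (\<forall>\<alpha>\<in>S. \<forall>z\<in>K. norm (h \<alpha> z) \<le> M \<alpha>)"
    if K: "K \<subseteq> D" "compact K" for K
  proof -
    have "\<And>T. T \<in> K \<Longrightarrow> open (UU T)" using UM K by blast
    moreover have "K \<subseteq> (\<Union>c\<in>K. UU c)" using UM K by blast
    ultimately obtain T where T: "T \<subseteq> K" "finite T" "K \<subseteq> (\<Union>c\<in>T. UU c)"
      using compactE_image[OF K(2), of K UU] by metis
    show ?thesis
    proof (intro exI[of _ "\<lambda>\<alpha>. \<Sum>t\<in>T. MM t \<alpha>"] conjI ballI)
      show "(\<lambda>\<alpha>. \<Sum>t\<in>T. MM t \<alpha>) summable_on S"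
        using T UM K by (intro summable_on_finite_sum) auto
      fix \<alpha> z assume \<alpha>: "\<alpha> \<in> S" and z: "z \<in> K"
      then obtain t where t: "t \<in> T" "z \<in> UU t" using T by blast
      then have tD: "t \<in> D" using T K by blast
      have "norm (h \<alpha> z) \<le> MM t \<alpha>" using UM tD t \<alpha> by blast
      also have "\<dots> \<le> (\<Sum>t\<in>T. MM t \<alpha>)"
        by (rule member_le_sum) (use t T K UM in auto)
      finally show "norm (h \<alpha> z) \<le> (\<Sum>t\<in>T. MM t \<alpha>)" .
    qed
  qed
  then show ?thesis unfolding locally_normally_convergent_def S_def h_def D_def by blast
qed

end
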